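(* There exists a topologically mixing homeomorphism of a compact metric space that has the L-shadowing property and has no periodic points.
   Context: L-shadowing for a homeomorphism $f$ of a compact metric space $(X,d)$: for every $\varepsilon>0$ there is $\delta>0$ such that every sequence $(x_k)_{k\in\mathbb{Z}}$ with $d(f(x_k),x_{k+1})\le\delta$ for all $k$ and $d(f(x_k),x_{k+1})\to0$ as $|k|\to\infty$ admits $z\in X$ with $d(f^k(z),x_k)\le\varepsilon$ for all $k$ and $d(f^k(z),x_k)\to0$ as $|k|\to\infty$. $f$ is topologically mixing if for all nonempty open $U,V$ there is $n>0$ with $f^k(U)\cap V\ne\emptyset$ for all $k\ge n$. *)

theory Defs
  imports "HOL-Analysis.Analysis"
begin

definition int_iter :: "'a set \<Rightarrow> ('a \<Rightarrow> 'a) \<Rightarrow> int \<Rightarrow> 'a \<Rightarrow> 'a" where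
  "int_iter S f k = (if 0 \<le> k then f ^^ nat k else inv_into S f ^^ nat (- k))"

definition L_shadowing :: "'a metric \<Rightarrow> ('a \<Rightarrow> 'a) \<Rightarrow> bool" where
  "L_shadowing m f \<longleftrightarrow>
    (\<forall>\<epsilon>>0. \<exists>\<delta>>0. \<forall>x :: int \<Rightarrow> 'a.
       ((\<forall>k. x k \<in> mspace m) \<and>
        (\<forall>k. mdist m (f (x k)) (x (k + 1)) \<le> \<delta>) \<and>
        ((\<lambda>k. mdist m (f (x k)) (x (k + 1))) \<longlongrightarrow> 0) at_top \<and>
        ((\<lambda>k. mdist m (f (x k)) (x (k + 1))) \<longlongrightarrow> 0) at_bot)
       \<longrightarrow> (\<exists>z \<in> mspace m.
              (\<forall>k. mdist m (int_iter (mspace m) f k z) (x k) \<le> \<epsilon>) \<and>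
              ((\<lambda>k. mdist m (int_iter (mspace m) f k z) (x k)) \<longlongrightarrow> 0) at_top \<and>
              ((\<lambda>k. mdist m (int_iter (mspace m) f k z) (x k)) \<longlongrightarrow> 0) at_bot))"

definition topologically_mixing :: "'a metric \<Rightarrow> ('a \<Rightarrow> 'a) \<Rightarrow> bool" where
  "topologically_mixing m f \<longleftrightarrow>
    (\<forall>U V. openin (mtopology_of m) U \<and> U \<noteq> {} \<and> openin (mtopology_of m) V \<and> V \<noteq> {}
       \<longrightarrow> (\<exists>n>0. \<forall>k\<ge>n. (f ^^ k) ` U \<inter> V \<noteq> {}))"

definition has_periodic_point :: "'a metric \<Rightarrow> ('a \<Rightarrow> 'a) \<Rightarrow> bool" where
  "has_periodic_point m f \<longleftrightarrow> (\<exists>x \<in> mspace m. \<exists>n>0. (f ^^ n) x = x)"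

end

theory Submission
  imports Defs "HOL-Library.Nat_Bijection" "HOL-Library.FuncSet"
begin


definition P :: "(nat \<Rightarrow> nat) \<Rightarrow> nat \<Rightarrow> int \<Rightarrow> nat" where
  "P x M j = x (prod_encode (M, int_encode j))"

definition mk :: "(nat \<Rightarrow> int \<Rightarrow> nat) \<Rightarrow> nat \<Rightarrow> nat" where
  "mk F = (\<lambda>i. case prod_decode i of (M, c) \<Rightarrow> F M (int_decode c))"

lemma P_mk [simp]: "P (mk F) M j = F M j"
  by (simp add: P_def mk_def)

lemma P_ext: "x = y \<longleftrightarrow> (\<forall>M j. P x M j = P y M j)"
proof
  assume h: "\<forall>M j. P x M j = P y M j"
  show "x = y"
  proof
    fix i
    obtain M c where "prod_decode i = (M, c)" by (cases "prod_decode i")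
    then have "i = prod_encode (M, int_encode (int_decode c))"
      by (metis int_decode_inverse prod_decode_inverse)
    then show "x i = y i" using h unfolding P_def by metis
  qed
qed simp

definition ok :: "nat \<Rightarrow> nat \<Rightarrow> nat \<Rightarrow> bool" where
  "ok q a b \<longleftrightarrow> a < q \<and> (b = (a + 1) mod q \<or> b = (a + 2) mod q)"

definition valid :: "nat \<Rightarrow> (int \<Rightarrow> nat) \<Rightarrow> bool" where
  "valid q \<alpha> \<longleftrightarrow> (\<forall>j. ok q (\<alpha> j) (\<alpha> (j + 1)))"

definition XX :: "(nat \<Rightarrow> nat) set" where
  "XX = {x. \<forall>M. valid (Suc M) (P x M)}"

definition sh :: "int \<Rightarrow> (nat \<Rightarrow> nat) \<Rightarrow> nat \<Rightarrow> nat" where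
  "sh k x = mk (\<lambda>M j. P x M (j + k))"

lemma P_sh [simp]: "P (sh k x) M j = P x M (j + k)"
  by (simp add: sh_def)

lemma sh_sh: "sh a (sh b x) = sh (a + b) x"
  by (simp add: P_ext ac_simps)

lemma sh_0 [simp]: "sh 0 x = x"
  by (simp add: P_ext)

lemma sh_XX: "x \<in> XX \<Longrightarrow> sh k x \<in> XX"
  unfolding XX_def valid_def by (simp add: algebra_simps) (metis add.commute add.left_commute)

lemma funpow_sh: "(sh 1 ^^ n) x = sh (int n) x"
  by (induction n) (simp_all add: sh_sh add.commute)

definition agree :: "nat \<Rightarrow> (nat \<Rightarrow> nat) \<Rightarrow> (nat \<Rightarrow> nat) \<Rightarrow> bool" where
  "agree n x y \<longleftrightarrow> (\<forall>M j. M + nat \<bar>j\<bar> < n \<longrightarrow> P x M j = P y M j)"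

lemma agree_mono: "agree n x y \<Longrightarrow> m \<le> n \<Longrightarrow> agree m x y"
  unfolding agree_def by auto

lemma agree_sym: "agree n x y = agree n y x"
  unfolding agree_def by auto

lemma agree_trans: "agree n x y \<Longrightarrow> agree n y z \<Longrightarrow> agree n x z"
  unfolding agree_def by auto

lemma agree_0 [simp]: "agree 0 x y"
  unfolding agree_def by auto

lemma agree_all: "(\<And>n. agree n x y) \<Longrightarrow> x = y"
  unfolding P_ext agree_def by (meson lessI)

definition dd :: "(nat \<Rightarrow> nat) \<Rightarrow> (nat \<Rightarrow> nat) \<Rightarrow> real" where
  "dd x y = (if x = y then 0 else (1/2::real) ^ (LEAST n. \<not> agree (Suc n) x y))"

lemma dd_le: "dd x y \<le> (1/2) ^ n \<longleftrightarrow> agree n x y"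
proof (cases "x = y")
  case True
  then show ?thesis by (simp add: dd_def agree_def)
next
  case False
  then obtain n0 where n0: "\<not> agree n0 x y" using agree_all by blast
  then obtain n1 where "\<not> agree (Suc n1) x y" by (cases n0) auto
  define L where "L = (LEAST n. \<not> agree (Suc n) x y)"
  have L1: "\<not> agree (Suc L) x y" unfolding L_def by (rule LeastI) fact
  have L2: "agree (Suc k) x y" if "k < L" for k using not_less_Least[of k] that unfolding L_def by blast
  have "agree n x y \<longleftrightarrow> n \<le> L"
  proof
    assume "agree n x y" then show "n \<le> L" using L1 agree_mono by (metis not_less_eq_eq)
  next
    assume "n \<le> L" then show "agree n x y" using L2 by (cases n) auto
  qed
  moreover have "dd x y = (1/2)^L" using False by (simp add: dd_def L_def)
  moreover have "((1/2::real)^L \<le> (1/2)^n) \<longleftrightarrow> n \<le> L"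
    by (simp add: power_decreasing_iff)
  ultimately show ?thesis by simp
qed

lemma dd_cases: "dd x y = 0 \<or> (\<exists>L. dd x y = (1/2)^L)"
  by (auto simp: dd_def)

lemma dd_nonneg: "0 \<le> dd x y"
  by (simp add: dd_def)

lemma dd_sym: "dd x y = dd y x"
  by (simp add: dd_def agree_sym)

lemma dd_zero: "dd x y = 0 \<longleftrightarrow> x = y"
  by (simp add: dd_def)

lemma dd_ultra: "dd x z \<le> max (dd x y) (dd y z)"
proof -
  consider "dd x y = 0" | A where "dd x y = (1/2)^A" using dd_cases by blast
  then show ?thesis
  proof cases
    case 1 then show ?thesis by (simp add: dd_zero)
  next
    case A: 2
    consider "dd y z = 0" | B where "dd y z = (1/2)^B" using dd_cases by blast
    then show ?thesis
    proof cases
      case 1 then show ?thesis using dd_zero[of y z] by simp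
    next
      case B: 2
      have "agree A x y" using A dd_le by (metis order_refl)
      moreover have "agree B y z" using B dd_le by (metis order_refl)
      ultimately have "agree (min A B) x z"
        by (meson agree_mono agree_trans min.cobounded1 min.cobounded2)
      then have "dd x z \<le> (1/2)^(min A B)" using dd_le by blast
      also have "\<dots> \<le> max (dd x y) (dd y z)" using A B by (cases "A \<le> B") (auto simp: min_def)
      finally show ?thesis .
    qed
  qed
qed

lemma Metric_XX: "Metric_space XX dd"
proof
  fix x y z
  show "0 \<le> dd x y" by (rule dd_nonneg)
  show "dd x y = dd y x" by (rule dd_sym)
  show "(dd x y = 0) = (x = y)" by (rule dd_zero)
  show "dd x z \<le> dd x y + dd y z"
    using dd_ultra[of x z y] dd_nonneg[of x y] dd_nonneg[of y z] by linarith
qed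



lemma path_exists:
  assumes q: "0 < q" and a: "a < q" and b: "b < q" and g: "q \<le> g"
  shows "\<exists>w. w 0 = a \<and> w g = b \<and> (\<forall>i. ok q (w i) (w (Suc i)))"
proof -
  define t where "t = nat ((int b - int a - int g) mod int q)"
  have tq: "t < q" unfolding t_def using q by (simp add: nat_less_iff)
  define w where "w i = (a + i + min i t) mod q" for i
  have "w 0 = a" using a by (simp add: w_def)
  moreover have "w g = b"
  proof -
    have "min g t = t" using tq g by simp
    then have "int (w g) = (int a + int g + int t) mod int q" by (simp add: w_def zmod_int)
    also have "int t = (int b - int a - int g) mod int q" unfolding t_def using q by simp
    also have "(int a + int g + (int b - int a - int g) mod int q) mod int q = int b mod int q"
      by (simp add: mod_add_right_eq)
    also have "\<dots> = int b" using b by simp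
    finally show ?thesis by simp
  qed
  moreover have "ok q (w i) (w (Suc i))" for i
  proof -
    have "w i < q" using q by (simp add: w_def)
    moreover have "w (Suc i) = (w i + (if i < t then 2 else 1)) mod q"
      unfolding w_def by (simp add: mod_add_left_eq min_def)
    ultimately show ?thesis unfolding ok_def by (auto split: if_splits)
  qed
  ultimately show ?thesis by blast
qed

lemma splice:
  fixes s t :: int
  assumes q: "0 < q" and st: "int q \<le> t - s"
    and \<alpha>: "\<And>j. j < s \<Longrightarrow> ok q (\<alpha> j) (\<alpha> (j + 1))" and \<alpha>s: "\<alpha> s < q"
    and \<beta>: "\<And>j. t \<le> j \<Longrightarrow> ok q (\<beta> j) (\<beta> (j + 1))" and \<beta>t: "\<beta> t < q"
  shows "\<exists>\<gamma>. valid q \<gamma> \<and> (\<forall>j\<le>s. \<gamma> j = \<alpha> j) \<and> (\<forall>j\<ge>t. \<gamma> j = \<beta> j)"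
proof -
  have gq: "q \<le> nat (t - s)" using st by linarith
  obtain w where w0: "w 0 = \<alpha> s" and wg: "w (nat (t - s)) = \<beta> t" and wok: "\<And>i. ok q (w i) (w (Suc i))"
    using path_exists[OF q \<alpha>s \<beta>t gq] by blast
  define \<gamma> where "\<gamma> j = (if j \<le> s then \<alpha> j else if t \<le> j then \<beta> j else w (nat (j - s)))" for j
  have mid: "\<gamma> j = w (nat (j - s))" if "s \<le> j" "j \<le> t" for j
    using that w0 wg unfolding \<gamma>_def by auto
  have "ok q (\<gamma> j) (\<gamma> (j + 1))" for j
  proof (cases "j < s")
    case True then show ?thesis using \<alpha>[OF True] by (simp add: \<gamma>_def)
  next
    case False
    show ?thesis
    proof (cases "t \<le> j")
      case True then show ?thesis using \<beta>[OF True] st q by (simp add: \<gamma>_def)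
    next
      case False': False
      have h1: "\<gamma> j = w (nat (j - s))" using mid False False' by simp
      have h2: "\<gamma> (j + 1) = w (nat (j + 1 - s))" using mid False False' by simp
      have "nat (j + 1 - s) = Suc (nat (j - s))" using False by simp
      then show ?thesis using wok h1 h2 by simp
    qed
  qed
  then have "valid q \<gamma>" unfolding valid_def by blast
  moreover have "\<forall>j\<le>s. \<gamma> j = \<alpha> j" by (simp add: \<gamma>_def)
  moreover have "\<forall>j\<ge>t. \<gamma> j = \<beta> j" using st q by (auto simp: \<gamma>_def)
  ultimately show ?thesis by blast
qed

lemma valid_iter:
  assumes "valid q \<alpha>"
  shows "\<exists>s. l \<le> s \<and> s \<le> 2 * l \<and> \<alpha> (j + int l) = (\<alpha> j + s) mod q"
proof (induction l)
  case 0
  have "\<alpha> j < q" using assms unfolding valid_def ok_def by blast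
  then show ?case by simp
next
  case (Suc l)
  then obtain s where s: "l \<le> s" "s \<le> 2 * l" "\<alpha> (j + int l) = (\<alpha> j + s) mod q" by blast
  have e: "j + int (Suc l) = j + int l + 1" by simp
  have "ok q (\<alpha> (j + int l)) (\<alpha> (j + int l + 1))" using assms unfolding valid_def by blast
  then consider "\<alpha> (j + int l + 1) = ((\<alpha> j + s) mod q + 1) mod q"
    | "\<alpha> (j + int l + 1) = ((\<alpha> j + s) mod q + 2) mod q"
    unfolding ok_def s(3) by blast
  then show ?case
  proof cases
    case 1
    then have "\<alpha> (j + int (Suc l)) = (\<alpha> j + (s + 1)) mod q" unfolding e by (simp only: mod_add_left_eq add.assoc)
    moreover have "Suc l \<le> s + 1" "s + 1 \<le> 2 * Suc l" using s by auto
    ultimately show ?thesis by blast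
  next
    case 2
    then have "\<alpha> (j + int (Suc l)) = (\<alpha> j + (s + 2)) mod q" unfolding e by (simp only: mod_add_left_eq add.assoc)
    moreover have "Suc l \<le> s + 2" "s + 2 \<le> 2 * Suc l" using s by auto
    ultimately show ?thesis by blast
  qed
qed

lemma no_periodic:
  assumes x: "x \<in> XX" and n: "0 < n" and per: "(sh 1 ^^ n) x = x"
  shows False
proof -
  have per': "P x (2*n) (0 + int n) = P x (2*n) 0"
    using per unfolding funpow_sh by (metis P_sh add.commute)
  have v: "valid (Suc (2*n)) (P x (2*n))" using x unfolding XX_def by blast
  obtain s where s: "n \<le> s" "s \<le> 2 * n" "P x (2*n) (0 + int n) = (P x (2*n) 0 + s) mod Suc (2*n)"
    using valid_iter[OF v] by blast
  have lt: "P x (2*n) 0 < Suc (2*n)" using v unfolding valid_def ok_def by blast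
  define a where "a = P x (2*n) 0"
  have "(a + s) mod Suc (2*n) = a" using s(3) per' a_def by simp
  moreover have "a < Suc (2*n)" using lt a_def by simp
  ultimately show False
  proof (cases "a + s < Suc (2*n)")
    case True then show False using \<open>(a + s) mod Suc (2*n) = a\<close> s n by simp
  next
    case False
    then have "(a + s) mod Suc (2*n) = (a + s - Suc (2*n)) mod Suc (2*n)" by (simp add: le_mod_geq)
    also have "\<dots> = a + s - Suc (2*n)" using s \<open>a < Suc (2*n)\<close> by simp
    finally show False using \<open>(a + s) mod Suc (2*n) = a\<close> s False by simp
  qed
qed

lemma XX_nonempty: "mk (\<lambda>M j. nat (j mod int (Suc M))) \<in> XX"
  unfolding XX_def valid_def ok_def mem_Collect_eq P_mk
proof (intro allI)
  fix M :: nat and j :: int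
  define Q where "Q = int (Suc M)"
  have Q: "Q > 0" "Q = int (Suc M)" by (auto simp: Q_def)
  have "(j + 1) mod Q = (j mod Q + 1) mod Q" by (simp add: mod_add_left_eq)
  then have "nat ((j + 1) mod Q) = (nat (j mod Q) + 1) mod Suc M"
    using Q by (simp add: nat_mod_distrib nat_add_distrib)
  moreover have "nat (j mod Q) < Suc M" using Q by (simp add: nat_less_iff)
  ultimately show "nat (j mod int (Suc M)) < Suc M \<and>
    (nat ((j + 1) mod int (Suc M)) = (nat (j mod int (Suc M)) + 1) mod Suc M \<or>
     nat ((j + 1) mod int (Suc M)) = (nat (j mod int (Suc M)) + 2) mod Suc M)"
    unfolding Q_def by blast
qed



lemma pow_small: "0 < (r::real) \<Longrightarrow> \<exists>n. (1/2::real)^n < r"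
  using real_arch_pow_inv[of r "1/2"] by auto

interpretation MX: Metric_space XX dd by (rule Metric_XX)

lemma agree_sh: "agree (n + nat \<bar>k\<bar>) x y \<Longrightarrow> agree n (sh k x) (sh k y)"
  unfolding agree_def by auto

lemma ball_agree:
  assumes "openin MX.mtopology U" "x \<in> U"
  shows "\<exists>n. \<forall>y\<in>XX. agree n x y \<longrightarrow> y \<in> U"
proof -
  obtain r where r: "r > 0" "MX.mball x r \<subseteq> U" using assms MX.openin_mtopology by blast
  obtain n where n: "(1/2::real)^n < r" using pow_small r by blast
  have "y \<in> U" if "y \<in> XX" "agree n x y" for y
  proof -
    have "dd x y < r" using that dd_le n by (meson le_less_trans)
    moreover have "x \<in> XX" using assms MX.openin_mtopology by blast
    ultimately show ?thesis using r that by auto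
  qed
  then show ?thesis by blast
qed

lemma sh_cont: "continuous_map MX.mtopology MX.mtopology (sh k)"
  unfolding MX.metric_continuous_map[OF Metric_XX]
proof (intro conjI ballI allI impI)
  show "sh k ` XX \<subseteq> XX" using sh_XX by blast
next
  fix a and e :: real assume "a \<in> XX" "0 < e"
  obtain n where n: "(1/2::real)^n < e" using pow_small \<open>0 < e\<close> by blast
  show "\<exists>\<delta>>0. \<forall>x. x \<in> XX \<and> dd a x < \<delta> \<longrightarrow> dd (sh k a) (sh k x) < e"
  proof (intro exI[of _ "(1/2)^(n + nat \<bar>k\<bar>)"] conjI allI impI)
    fix x assume "x \<in> XX \<and> dd a x < (1/2)^(n + nat \<bar>k\<bar>)"
    then have "agree (n + nat \<bar>k\<bar>) a x" using dd_le by (meson less_imp_le)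
    then have "agree n (sh k a) (sh k x)" by (rule agree_sh)
    then show "dd (sh k a) (sh k x) < e" using dd_le n by (meson le_less_trans)
  qed simp
qed

lemma homeo: "homeomorphic_map MX.mtopology MX.mtopology (sh 1)"
  unfolding homeomorphic_map_maps
proof (intro exI[of _ "sh (-1)"])
  show "homeomorphic_maps MX.mtopology MX.mtopology (sh 1) (sh (- 1))"
    unfolding homeomorphic_maps_def using sh_cont[of 1] sh_cont[of "-1"] by (auto simp: sh_sh)
qed

lemma totally_bounded: "MX.mtotally_bounded XX"
  unfolding MX.mtotally_bounded_def
proof (intro allI impI)
  fix e :: real assume "0 < e"
  obtain n where n: "(1/2::real)^n < e" using pow_small \<open>0 < e\<close> by blast
  define W where "W = {(M, j). M + nat \<bar>j\<bar> < n}"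
  have W: "W \<subseteq> {..<n} \<times> {- int n..int n}" unfolding W_def by auto
  then have fW: "finite W" by (rule finite_subset) auto
  define R where "R x = restrict (\<lambda>p. P x (fst p) (snd p)) W" for x
  have RX: "R ` XX \<subseteq> (\<Pi>\<^sub>E p\<in>W. {..<n})"
  proof
    fix g assume "g \<in> R ` XX"
    then obtain x where x: "x \<in> XX" "g = R x" by blast
    have "P x M j < n" if "(M, j) \<in> W" for M j
    proof -
      have "P x M j < Suc M" using x unfolding XX_def valid_def ok_def by blast
      then show ?thesis using that unfolding W_def by auto
    qed
    then show "g \<in> (\<Pi>\<^sub>E p\<in>W. {..<n})" using x unfolding R_def by auto
  qed
  have fin: "finite (R ` XX)" by (rule finite_subset[OF RX finite_PiE[OF fW]]) auto
  define K where "K = (\<lambda>g. SOME x. x \<in> XX \<and> R x = g) ` (R ` XX)"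
  have "finite K" unfolding K_def using fin by blast
  moreover have "K \<subseteq> XX"
  proof
    fix k assume "k \<in> K"
    then obtain x where "x \<in> XX" "k = (SOME y. y \<in> XX \<and> R y = R x)" unfolding K_def by blast
    then show "k \<in> XX" using someI[of "\<lambda>y. y \<in> XX \<and> R y = R x" x] by auto
  qed
  moreover have "XX \<subseteq> (\<Union>x\<in>K. MX.mball x e)"
  proof
    fix x assume x: "x \<in> XX"
    define k where "k = (SOME y. y \<in> XX \<and> R y = R x)"
    have k: "k \<in> XX \<and> R k = R x" unfolding k_def by (rule someI[of _ x]) (simp add: x)
    have "k \<in> K" unfolding K_def k_def using x by blast
    have "agree n k x" unfolding agree_def
    proof (intro allI impI)
      fix M j assume "M + nat \<bar>j\<bar> < n"
      then have "(M, j) \<in> W" unfolding W_def by simp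
      moreover have "R k (M, j) = R x (M, j)" using k by simp
      ultimately show "P k M j = P x M j" unfolding R_def by simp
    qed
    then have "dd k x < e" using dd_le n by (meson le_less_trans)
    then have "x \<in> MX.mball k e" using k x by (simp add: MX.in_mball)
    then show "x \<in> (\<Union>x\<in>K. MX.mball x e)" using \<open>k \<in> K\<close> by blast
  qed
  ultimately show "\<exists>K. finite K \<and> K \<subseteq> XX \<and> XX \<subseteq> (\<Union>x\<in>K. MX.mball x e)" by blast
qed

lemma complete: "MX.mcomplete"
  unfolding MX.mcomplete_def
proof (intro allI impI)
  fix \<sigma> assume C: "MX.MCauchy \<sigma>"
  then have sX: "\<sigma> a \<in> XX" for a unfolding MX.MCauchy_def by auto
  have "\<exists>N. \<forall>a b. N \<le> a \<longrightarrow> N \<le> b \<longrightarrow> agree r (\<sigma> a) (\<sigma> b)" for r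
  proof -
    have pos: "(0::real) < (1/2)^r" by simp
    obtain N where "\<forall>a b. N \<le> a \<longrightarrow> N \<le> b \<longrightarrow> dd (\<sigma> a) (\<sigma> b) < (1/2)^r"
      using C pos unfolding MX.MCauchy_def by blast
    then show ?thesis using dd_le by (meson less_imp_le)
  qed
  then obtain N where N: "\<And>r a b. N r \<le> a \<Longrightarrow> N r \<le> b \<Longrightarrow> agree r (\<sigma> a) (\<sigma> b)" by metis
  define NN where "NN n = (\<Sum>r\<le>n. N r)" for n
  have NN: "N r \<le> NN n" if "r \<le> n" for r n
    unfolding NN_def using that by (intro member_le_sum) auto
  define rk where "rk M j = Suc (M + nat \<bar>j\<bar>)" for M j
  define y where "y = mk (\<lambda>M j. P (\<sigma> (N (rk M j))) M j)"
  have key: "P y M j = P (\<sigma> a) M j" if "N (rk M j) \<le> a" for M j a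
  proof -
    have "agree (rk M j) (\<sigma> (N (rk M j))) (\<sigma> a)" using N that by blast
    then show ?thesis unfolding y_def agree_def rk_def by simp
  qed
  have "y \<in> XX" unfolding XX_def valid_def
  proof (intro CollectI allI)
    fix M j
    define a where "a = max (N (rk M j)) (N (rk M (j+1)))"
    have "P y M j = P (\<sigma> a) M j" "P y M (j+1) = P (\<sigma> a) M (j+1)"
      using key a_def by auto
    then show "ok (Suc M) (P y M j) (P y M (j + 1))"
      using sX[of a] unfolding XX_def valid_def by simp
  qed
  moreover have conv: "\<forall>e>0. \<exists>K. \<forall>a\<ge>K. \<sigma> a \<in> XX \<and> dd (\<sigma> a) y < e"
  proof (intro allI impI)
    fix e :: real assume "0 < e"
    obtain n where n: "(1/2::real)^n < e" using pow_small \<open>0 < e\<close> by blast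
    have "\<sigma> a \<in> XX \<and> dd (\<sigma> a) y < e" if "NN n \<le> a" for a
    proof -
      have "agree n (\<sigma> a) y" unfolding agree_def
      proof (intro allI impI)
        fix M j assume "M + nat \<bar>j\<bar> < n"
        then have "rk M j \<le> n" unfolding rk_def by simp
        then show "P (\<sigma> a) M j = P y M j" using key NN that by (metis le_trans)
      qed
      then show ?thesis using sX dd_le n by (meson le_less_trans)
    qed
    then show "\<exists>K. \<forall>a\<ge>K. \<sigma> a \<in> XX \<and> dd (\<sigma> a) y < e" by blast
  qed
  ultimately have "limitin MX.mtopology \<sigma> y sequentially"
    unfolding MX.limit_metric_sequentially by (rule conjI)
  then show "\<exists>x. limitin MX.mtopology \<sigma> x sequentially" by blast
qed

lemma compact: "compact_space MX.mtopology"
  unfolding MX.compact_space_eq_mcomplete_mtotally_bounded using complete totally_bounded by (rule conjI)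



lemma P_mk' [simp]: "P (mk F) M = F M"
  by (rule ext) simp

lemma ok_valid: "valid q \<alpha> \<Longrightarrow> ok q (\<alpha> j) (\<alpha> (j + 1))"
  unfolding valid_def by blast

lemma P_lt: "x \<in> XX \<Longrightarrow> P x M j < Suc M"
  unfolding XX_def valid_def ok_def by blast

lemma mixing: "topologically_mixing (metric (XX, dd)) (sh 1)"
  unfolding topologically_mixing_def MX.mtopology_of
proof (intro allI impI)
  fix U V assume H: "openin MX.mtopology U \<and> U \<noteq> {} \<and> openin MX.mtopology V \<and> V \<noteq> {}"
  then obtain x y where xy: "x \<in> U" "y \<in> V" by blast
  have UX: "U \<subseteq> XX" "V \<subseteq> XX" using H MX.openin_mtopology by blast+
  obtain n1 where n1: "\<forall>w\<in>XX. agree n1 x w \<longrightarrow> w \<in> U" using ball_agree H xy by blast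
  obtain n2 where n2: "\<forall>w\<in>XX. agree n2 y w \<longrightarrow> w \<in> V" using ball_agree H xy by blast
  define n where "n = max n1 n2"
  have nU: "w \<in> U" if "w \<in> XX" "agree n x w" for w using n1 that agree_mono n_def by fastforce
  have nV: "w \<in> V" if "w \<in> XX" "agree n y w" for w using n2 that agree_mono n_def by fastforce
  have xX: "x \<in> XX" and yX: "y \<in> XX" using UX xy by auto
  show "\<exists>N>0. \<forall>k\<ge>N. (sh 1 ^^ k) ` U \<inter> V \<noteq> {}"
  proof (intro exI[of _ "3 * n + 2"] conjI allI impI)
    fix k assume k: "3 * n + 2 \<le> k"
    have "\<exists>\<gamma>. valid (Suc M) \<gamma> \<and> (\<forall>j\<le>int n. \<gamma> j = P x M j) \<and> (\<forall>j\<ge>int k - int n. \<gamma> j = P y M (j - int k))"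
      if "M < n" for M
    proof (rule splice)
      show "int (Suc M) \<le> int k - int n - int n" using k that by linarith
      show "ok (Suc M) (P x M j) (P x M (j + 1))" for j using xX unfolding XX_def by (simp add: ok_valid)
      show "ok (Suc M) (P y M (j - int k)) (P y M (j + 1 - int k))" for j
        using ok_valid[of "Suc M" "P y M" "j - int k"] yX unfolding XX_def by (simp add: algebra_simps)
      show "P x M (int n) < Suc M" using P_lt xX by blast
      show "P y M (int k - int n - int k) < Suc M" using P_lt yX by blast
    qed simp
    then obtain G where G: "\<And>M. M < n \<Longrightarrow> valid (Suc M) (G M) \<and> (\<forall>j\<le>int n. G M j = P x M j) \<and> (\<forall>j\<ge>int k - int n. G M j = P y M (j - int k))"
      by metis
    define u where "u = mk (\<lambda>M. if M < n then G M else P x M)"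
    have uX: "u \<in> XX" unfolding XX_def mem_Collect_eq
    proof
      fix M show "valid (Suc M) (P u M)"
      proof (cases "M < n")
        case True then show ?thesis using G[OF True] unfolding u_def by simp
      next
        case False then show ?thesis using xX unfolding u_def XX_def by simp
      qed
    qed
    have "agree n x u" unfolding agree_def
    proof (intro allI impI)
      fix M j assume a: "M + nat \<bar>j\<bar> < n"
      then have "M < n" "j \<le> int n" by auto
      then show "P x M j = P u M j" using G[OF \<open>M < n\<close>] unfolding u_def by simp
    qed
    then have "u \<in> U" using nU uX by blast
    have "agree n y (sh (int k) u)" unfolding agree_def
    proof (intro allI impI)
      fix M j assume a: "M + nat \<bar>j\<bar> < n"
      then have "M < n" "int k - int n \<le> j + int k" by auto
      then have "G M (j + int k) = P y M (j + int k - int k)" using G[OF \<open>M < n\<close>] by blast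
      then show "P y M j = P (sh (int k) u) M j" using \<open>M < n\<close> unfolding u_def by simp
    qed
    then have "sh (int k) u \<in> V" using nV uX sh_XX by blast
    moreover have "sh (int k) u \<in> (sh 1 ^^ k) ` U" using \<open>u \<in> U\<close> funpow_sh by (metis image_eqI)
    ultimately show "(sh 1 ^^ k) ` U \<inter> V \<noteq> {}" by blast
  qed simp
qed



lemma P_mk'' [simp]: "P (mk F) M = F M"
  by (rule ext) simp

lemma ok_valid': "valid q \<alpha> \<Longrightarrow> ok q (\<alpha> j) (\<alpha> (j + 1))"
  unfolding valid_def by blast

lemma P_lt': "x \<in> XX \<Longrightarrow> P x M j < Suc M"
  unfolding XX_def valid_def ok_def by blast

lemma mspacem: "mspace (metric (XX, dd)) = XX" by simp
lemma mdistm: "mdist (metric (XX, dd)) = dd" by simp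

lemma int_iter_sh:
  assumes z: "z \<in> XX"
  shows "int_iter XX (sh 1) k z = sh k z"
proof -
  have inj: "inj_on (sh 1) XX"
    by (rule inj_onI) (metis sh_sh sh_0 add.commute add.right_inverse)
  have inv: "inv_into XX (sh 1) y = sh (-1) y" if "y \<in> XX" for y
    by (rule inv_into_f_eq[OF inj]) (auto simp: sh_sh that sh_XX)
  have "(inv_into XX (sh 1) ^^ n) z = sh (- int n) z" for n
  proof (induction n)
    case 0 then show ?case by simp
  next
    case (Suc n)
    have "(inv_into XX (sh 1) ^^ Suc n) z = inv_into XX (sh 1) (sh (- int n) z)" using Suc by simp
    also have "\<dots> = sh (-1) (sh (- int n) z)" using inv sh_XX z by blast
    also have "\<dots> = sh (- int (Suc n)) z" by (simp add: sh_sh)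
    finally show ?case .
  qed
  then show ?thesis unfolding int_iter_def funpow_sh by auto
qed

lemma chain:
  fixes xs :: "int \<Rightarrow> nat \<Rightarrow> nat"
  assumes "\<And>i. a \<le> i \<Longrightarrow> i < a + int l \<Longrightarrow> agree R (sh 1 (xs i)) (xs (i + 1))"
    and "M + nat \<bar>j\<bar> < R" and "M + nat \<bar>j + int l\<bar> < R"
  shows "P (xs (a + int l)) M j = P (xs a) M (j + int l)"
  using assms
proof (induction l arbitrary: j)
  case 0 then show ?case by simp
next
  case (Suc l)
  have "agree R (sh 1 (xs (a + int l))) (xs (a + int l + 1))" using Suc.prems(1) by simp
  then have "P (xs (a + int l)) M (j + 1) = P (xs (a + int l + 1)) M j"
    using Suc.prems(2) unfolding agree_def by simp
  moreover have e: "a + int (Suc l) = a + int l + 1" by simp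
  ultimately have "P (xs (a + int (Suc l))) M j = P (xs (a + int l)) M (j + 1)"
    unfolding e by metis
  also have "\<dots> = P (xs a) M (j + 1 + int l)"
  proof (rule Suc.IH)
    show "M + nat \<bar>j + 1\<bar> < R" using Suc.prems(2,3) by arith
    show "M + nat \<bar>j + 1 + int l\<bar> < R" using Suc.prems(3) by (simp add: add.assoc)
  qed (use Suc.prems(1) in auto)
  finally show ?case by (simp add: algebra_simps)
qed

lemma chain2:
  fixes xs :: "int \<Rightarrow> nat \<Rightarrow> nat"
  assumes st: "\<And>i. min k (k + j) \<le> i \<Longrightarrow> i < max k (k + j) \<Longrightarrow> agree R (sh 1 (xs i)) (xs (i + 1))"
    and MR: "M + nat \<bar>j\<bar> < R"
  shows "P (xs (k + j)) M 0 = P (xs k) M j"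
proof (cases "0 \<le> j")
  case True
  have "P (xs (k + int (nat j))) M 0 = P (xs k) M (0 + int (nat j))"
    by (rule chain) (use st MR True in auto)
  then show ?thesis using True by simp
next
  case False
  have "P (xs ((k + j) + int (nat (- j)))) M j = P (xs (k + j)) M (j + int (nat (- j)))"
    by (rule chain) (use st MR False in auto)
  then show ?thesis using False by simp
qed

lemma Lsh: "L_shadowing (metric (XX, dd)) (sh 1)"
  unfolding L_shadowing_def mspacem mdistm
proof (intro allI impI)
  fix \<epsilon> :: real assume "0 < \<epsilon>"
  obtain n where n: "(1/2::real)^n < \<epsilon>" using pow_small \<open>0 < \<epsilon>\<close> by blast
  show "\<exists>\<delta>>0. \<forall>x. (\<forall>k. x k \<in> XX) \<and> (\<forall>k. dd (sh 1 (x k)) (x (k + 1)) \<le> \<delta>) \<and>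
              ((\<lambda>k. dd (sh 1 (x k)) (x (k + 1))) \<longlongrightarrow> 0) at_top \<and>
              ((\<lambda>k. dd (sh 1 (x k)) (x (k + 1))) \<longlongrightarrow> 0) at_bot \<longrightarrow>
              (\<exists>z\<in>XX. (\<forall>k. dd (int_iter XX (sh 1) k z) (x k) \<le> \<epsilon>) \<and>
                  ((\<lambda>k. dd (int_iter XX (sh 1) k z) (x k)) \<longlongrightarrow> 0) at_top \<and>
                  ((\<lambda>k. dd (int_iter XX (sh 1) k z) (x k)) \<longlongrightarrow> 0) at_bot)"
  proof (intro exI[of _ "(1/2)^n"] conjI allI impI)
    fix xs :: "int \<Rightarrow> nat \<Rightarrow> nat"
    assume H: "(\<forall>k. xs k \<in> XX) \<and> (\<forall>k. dd (sh 1 (xs k)) (xs (k + 1)) \<le> (1/2)^n) \<and>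
              ((\<lambda>k. dd (sh 1 (xs k)) (xs (k + 1))) \<longlongrightarrow> 0) at_top \<and>
              ((\<lambda>k. dd (sh 1 (xs k)) (xs (k + 1))) \<longlongrightarrow> 0) at_bot"
    have xX: "\<And>k. xs k \<in> XX" using H by blast
    have stp: "\<And>k. agree n (sh 1 (xs k)) (xs (k + 1))" using H dd_le by blast
    have tt: "((\<lambda>k. dd (sh 1 (xs k)) (xs (k + 1))) \<longlongrightarrow> 0) at_top" using H by blast
    have tb: "((\<lambda>k. dd (sh 1 (xs k)) (xs (k + 1))) \<longlongrightarrow> 0) at_bot" using H by blast
    have asy: "\<exists>T::nat. \<forall>k. int T \<le> \<bar>k\<bar> \<longrightarrow> agree r (sh 1 (xs k)) (xs (k + 1))" for r
    proof -
      have pos: "(0::real) < (1/2)^r" by simp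
      have "eventually (\<lambda>k. dist (dd (sh 1 (xs k)) (xs (k + 1))) 0 < (1/2)^r) at_top"
        using tt[unfolded tendsto_iff] pos by blast
      then obtain K1 where K1: "\<And>k. K1 \<le> k \<Longrightarrow> dd (sh 1 (xs k)) (xs (k + 1)) < (1/2)^r"
        by (auto simp: eventually_at_top_linorder dd_nonneg)
      have "eventually (\<lambda>k. dist (dd (sh 1 (xs k)) (xs (k + 1))) 0 < (1/2)^r) at_bot"
        using tb[unfolded tendsto_iff] pos by blast
      then obtain K2 where K2: "\<And>k. k \<le> K2 \<Longrightarrow> dd (sh 1 (xs k)) (xs (k + 1)) < (1/2)^r"
        by (auto simp: eventually_at_bot_linorder dd_nonneg)
      have "agree r (sh 1 (xs k)) (xs (k + 1))" if "int (nat (max \<bar>K1\<bar> \<bar>K2\<bar>) + 1) \<le> \<bar>k\<bar>" for k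
      proof -
        have "K1 \<le> k \<or> k \<le> K2" using that by arith
        then have "dd (sh 1 (xs k)) (xs (k + 1)) < (1/2)^r" using K1 K2 by blast
        then show ?thesis using dd_le by (meson less_imp_le)
      qed
      then show ?thesis by blast
    qed
    obtain T where T: "\<And>r k. int (T r) \<le> \<bar>k\<bar> \<Longrightarrow> agree r (sh 1 (xs k)) (xs (k + 1))"
      using asy by metis
    define TT where "TT r = (\<Sum>i\<le>r. T i)" for r
    have TT: "T r \<le> TT r" for r unfolding TT_def by (intro member_le_sum) auto
    have TTmono: "TT r \<le> TT r'" if "r \<le> r'" for r r'
      unfolding TT_def using that by (intro sum_mono2) auto
    define S where "S M = TT (Suc M) + Suc M" for M
    have Smono: "S M \<le> S M'" if "M \<le> M'" for M M' unfolding S_def using TTmono[of "Suc M" "Suc M'"] that by simp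
    have far: "ok (Suc M) (P (xs j) M 0) (P (xs (j + 1)) M 0)" if "int (S M) \<le> \<bar>j\<bar>" for M j
    proof -
      have "int (T (Suc M)) \<le> \<bar>j\<bar>" using that TT[of "Suc M"] unfolding S_def by linarith
      then have "agree (Suc M) (sh 1 (xs j)) (xs (j + 1))" by (rule T)
      then have "P (xs (j + 1)) M 0 = P (xs j) M (0 + 1)" unfolding agree_def
        by (metis P_sh add_0 lessI nat_zero_as_int abs_zero add.right_neutral)
      then show ?thesis using ok_valid'[of "Suc M" "P (xs j) M" 0] xX[of j] unfolding XX_def by simp
    qed
    have "\<exists>\<gamma>. valid (Suc M) \<gamma> \<and> (\<forall>j\<le>- int (S M). \<gamma> j = P (xs j) M 0) \<and> (\<forall>j\<ge>int (S M). \<gamma> j = P (xs j) M 0)" for M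
    proof (rule splice)
      show "int (Suc M) \<le> int (S M) - - int (S M)" unfolding S_def by simp
      show "ok (Suc M) (P (xs j) M 0) (P (xs (j + 1)) M 0)" if "j < - int (S M)" for j
        using far that by simp
      show "ok (Suc M) (P (xs j) M 0) (P (xs (j + 1)) M 0)" if "int (S M) \<le> j" for j
        using far that by simp
      show "P (xs (- int (S M))) M 0 < Suc M" using P_lt' xX by blast
      show "P (xs (int (S M))) M 0 < Suc M" using P_lt' xX by blast
    qed simp
    then obtain G where G: "\<And>M. valid (Suc M) (G M) \<and> (\<forall>j\<le>- int (S M). G M j = P (xs j) M 0) \<and> (\<forall>j\<ge>int (S M). G M j = P (xs j) M 0)"
      by metis
    define Z where "Z M = (if M < n then (\<lambda>i. P (xs i) M 0) else G M)" for M
    have Zfar: "Z M i = P (xs i) M 0" if "int (S M) \<le> \<bar>i\<bar>" for M i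
    proof (cases "M < n")
      case True then show ?thesis by (simp add: Z_def)
    next
      case False
      have "i \<le> - int (S M) \<or> int (S M) \<le> i" using that by arith
      then show ?thesis using G[of M] False unfolding Z_def by auto
    qed
    have Znear: "Z M i = P (xs i) M 0" if "M < n" for M i using that by (simp add: Z_def)
    have Zvalid: "valid (Suc M) (Z M)" for M
    proof (cases "M < n")
      case True
      have "ok (Suc M) (P (xs i) M 0) (P (xs (i + 1)) M 0)" for i
      proof -
        have "P (xs (i + 1)) M 0 = P (xs i) M (0 + 1)" using stp[of i] True unfolding agree_def
          by (metis P_sh add_0 nat_zero_as_int abs_zero add.right_neutral)
        then show ?thesis using ok_valid'[of "Suc M" "P (xs i) M" 0] xX[of i] unfolding XX_def by simp
      qed
      then show ?thesis using True unfolding Z_def valid_def by simp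
    next
      case False then show ?thesis using G[of M] unfolding Z_def by simp
    qed
    define z where "z = mk Z"
    have zX: "z \<in> XX" unfolding XX_def z_def using Zvalid by simp
    have iter: "int_iter XX (sh 1) k z = sh k z" for k using int_iter_sh[OF zX] .
    have close: "agree n (sh k z) (xs k)" for k unfolding agree_def
    proof (intro allI impI)
      fix M j assume a: "M + nat \<bar>j\<bar> < n"
      then have "M < n" by simp
      have "P (sh k z) M j = P (xs (k + j)) M 0" using Znear[OF \<open>M < n\<close>] by (simp add: z_def add.commute)
      also have "\<dots> = P (xs k) M j" by (rule chain2) (use stp a in auto)
      finally show "P (sh k z) M j = P (xs k) M j" .
    qed
    have asym: "\<exists>K::int. \<forall>k. K \<le> \<bar>k\<bar> \<longrightarrow> agree r (sh k z) (xs k)" for r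
    proof (intro exI[of _ "int (S r) + int (TT r) + int r"] allI impI)
      fix k :: int assume k: "int (S r) + int (TT r) + int r \<le> \<bar>k\<bar>"
      show "agree r (sh k z) (xs k)" unfolding agree_def
      proof (intro allI impI)
        fix M j assume a: "M + nat \<bar>j\<bar> < r"
        have "S M \<le> S r" using a by (intro Smono) simp
        then have "int (S M) \<le> \<bar>k + j\<bar>" using k a by arith
        then have "P (sh k z) M j = P (xs (k + j)) M 0" using Zfar by (simp add: z_def add.commute)
        also have "\<dots> = P (xs k) M j"
        proof (rule chain2)
          show "M + nat \<bar>j\<bar> < r" by fact
          fix i assume i: "min k (k + j) \<le> i" "i < max k (k + j)"
          have "int (T r) \<le> \<bar>i\<bar>" using i k a TT[of r] by arith
          then show "agree r (sh 1 (xs i)) (xs (i + 1))" by (rule T)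
        qed
        finally show "P (sh k z) M j = P (xs k) M j" .
      qed
    qed
    have lim: "((\<lambda>k. dd (sh k z) (xs k)) \<longlongrightarrow> 0) F"
      if F: "\<And>K. eventually (\<lambda>k::int. K \<le> \<bar>k\<bar>) F" for F
      unfolding tendsto_iff
    proof (intro allI impI)
      fix e :: real assume "0 < e"
      obtain r where r: "(1/2::real)^r < e" using pow_small \<open>0 < e\<close> by blast
      obtain K where K: "\<And>k. K \<le> \<bar>k\<bar> \<Longrightarrow> agree r (sh k z) (xs k)" using asym by blast
      show "eventually (\<lambda>k. dist (dd (sh k z) (xs k)) 0 < e) F"
        using F[of K]
      proof (rule eventually_mono)
        fix k :: int assume "K \<le> \<bar>k\<bar>"
        then have "dd (sh k z) (xs k) \<le> (1/2)^r" using K dd_le by blast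
        then show "dist (dd (sh k z) (xs k)) 0 < e" using r dd_nonneg by simp
      qed
    qed
    have evtop: "eventually (\<lambda>k::int. K \<le> \<bar>k\<bar>) at_top" for K
      unfolding eventually_at_top_linorder by (intro exI[of _ K]) auto
    have evbot: "eventually (\<lambda>k::int. K \<le> \<bar>k\<bar>) at_bot" for K
      unfolding eventually_at_bot_linorder by (intro exI[of _ "- K"]) auto
    show "\<exists>z\<in>XX. (\<forall>k. dd (int_iter XX (sh 1) k z) (xs k) \<le> \<epsilon>) \<and>
                  ((\<lambda>k. dd (int_iter XX (sh 1) k z) (xs k)) \<longlongrightarrow> 0) at_top \<and>
                  ((\<lambda>k. dd (int_iter XX (sh 1) k z) (xs k)) \<longlongrightarrow> 0) at_bot"
    proof (intro bexI[of _ z] conjI allI)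
      show "dd (int_iter XX (sh 1) k z) (xs k) \<le> \<epsilon>" for k
        using close[of k] dd_le n iter by (metis less_imp_le order_trans)
      show "((\<lambda>k. dd (int_iter XX (sh 1) k z) (xs k)) \<longlongrightarrow> 0) at_top"
        unfolding iter using lim evtop by blast
      show "((\<lambda>k. dd (int_iter XX (sh 1) k z) (xs k)) \<longlongrightarrow> 0) at_bot"
        unfolding iter using lim evbot by blast
    qed (rule zX)
  qed simp
qed


theorem theoremC:
  shows "\<exists>(m :: (nat \<Rightarrow> nat) metric) f.
           mspace m \<noteq> {} \<and>
           compact_space (mtopology_of m) \<and>
           homeomorphic_map (mtopology_of m) (mtopology_of m) f \<and>
           topologically_mixing m f \<and>
           L_shadowing m f \<and>
           \<not> has_periodic_point m f"
proof (intro exI[of _ "metric (XX, dd)"] exI[of _ "sh 1"] conjI)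
  show "mspace (metric (XX, dd)) \<noteq> {}" using XX_nonempty by auto
  show "compact_space (mtopology_of (metric (XX, dd)))" using compact by simp
  show "homeomorphic_map (mtopology_of (metric (XX, dd))) (mtopology_of (metric (XX, dd))) (sh 1)"
    using homeo by simp
  show "topologically_mixing (metric (XX, dd)) (sh 1)" by (rule mixing)
  show "L_shadowing (metric (XX, dd)) (sh 1)" by (rule Lsh)
  show "\<not> has_periodic_point (metric (XX, dd)) (sh 1)"
    unfolding has_periodic_point_def using no_periodic by auto
qed

end
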